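(* If $G$ is the $3\times 3$, $3\times 5$, or $4\times 4$ square lattice graph $P_m\times P_n$, then $T_1(G)=3$.
   Context: $P_m\times P_n$ is the Cartesian product of paths on $m$ and $n$ vertices (the $m\times n$ square lattice graph). Fix a set $\Sigma$ of symbols (bond-edge types) and a disjoint copy $\hat\Sigma=\{\hat a:a\in\Sigma\}$ with $\hat{\hat a}=a$; elements of $\Sigma\cup\hat\Sigma$ are cohesive-end types. A tile is a finite multiset of cohesive-end types. A pot is a finite set $P$ of tiles such that whenever $x$ occurs in a tile of $P$, $\hat x$ occurs in some tile of $P$; $\#P$ is its number of tiles. Graphs are finite, loops and multiple edges allowed. An assembly design of a graph $H$ labels the half-edges of $H$ by cohesive-end types so that the two half-edges of each edge receive complementary labels $x,\hat x$; $t_v$ is the multiset of labels at $v$, $P_\lambda(H)=\{t_v\}$, and $P$ realizes $H$ ($H\in\mathcal{O}(P)$) if some assembly design $\lambda$ has $P_\lambda(H)\subseteq P$. $T_1(G)=\min\{\#P: G\in\mathcal{O}(P)\}$. *)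

theory Defs
  imports Main "HOL-Library.Multiset"
begin

text \<open>Cohesive-end types: a symbol a (from Sigma = nat) together with a flag;
  (a, False) is the bond-edge type a, (a, True) is its complement hat a.\<close>
type_synonym cet = "nat \<times> bool"

definition hat :: "cet \<Rightarrow> cet" where
  "hat x = (fst x, \<not> snd x)"

type_synonym tile = "cet multiset"

definition is_pot :: "tile set \<Rightarrow> bool" where
  "is_pot P \<longleftrightarrow> finite P \<and>
     (\<forall>t\<in>P. \<forall>x. x \<in># t \<longrightarrow> (\<exists>t'\<in>P. hat x \<in># t'))"

text \<open>Simple graphs are given by a finite vertex set V and a symmetric, irreflexive
  adjacency relation E. A labelling lam assigns to the half-edge of edge {u,v} at u
  the label lam u v; an assembly design requires complementary labels on each edge.\<close>
definition assembly_design :: "'v set \<Rightarrow> ('v \<Rightarrow> 'v \<Rightarrow> bool) \<Rightarrow> ('v \<Rightarrow> 'v \<Rightarrow> cet) \<Rightarrow> bool" where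
  "assembly_design V E lam \<longleftrightarrow> (\<forall>u\<in>V. \<forall>v\<in>V. E u v \<longrightarrow> lam v u = hat (lam u v))"

definition tile_at :: "'v set \<Rightarrow> ('v \<Rightarrow> 'v \<Rightarrow> bool) \<Rightarrow> ('v \<Rightarrow> 'v \<Rightarrow> cet) \<Rightarrow> 'v \<Rightarrow> tile" where
  "tile_at V E lam v = image_mset (lam v) (mset_set {w \<in> V. E v w})"

definition realizes :: "tile set \<Rightarrow> 'v set \<Rightarrow> ('v \<Rightarrow> 'v \<Rightarrow> bool) \<Rightarrow> bool" where
  "realizes P V E \<longleftrightarrow>
     (\<exists>lam. assembly_design V E lam \<and> (\<forall>v\<in>V. tile_at V E lam v \<in> P))"

definition T1 :: "'v set \<Rightarrow> ('v \<Rightarrow> 'v \<Rightarrow> bool) \<Rightarrow> nat" where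
  "T1 V E = (LEAST k. \<exists>P. is_pot P \<and> realizes P V E \<and> card P = k)"

definition grid_V :: "nat \<Rightarrow> nat \<Rightarrow> (nat \<times> nat) set" where
  "grid_V m n = {0..<m} \<times> {0..<n}"

definition grid_E :: "nat \<times> nat \<Rightarrow> nat \<times> nat \<Rightarrow> bool" where
  "grid_E p q \<longleftrightarrow>
     (fst p = fst q \<and> (snd p = snd q + 1 \<or> snd q = snd p + 1)) \<or>
     (snd p = snd q \<and> (fst p = fst q + 1 \<or> fst q = fst p + 1))"

end

theory Submission imports Defs begin

lemma lt3: "{0..<3::nat} = {0,1,2}" by auto
lemma lt4: "{0..<4::nat} = {0,1,2,3}" by auto
lemma lt5: "{0..<5::nat} = {0,1,2,3,4}" by auto

lemma nbr: "i<m \<Longrightarrow> j<n \<Longrightarrow> {w\<in>grid_V m n. grid_E (i,j) w} =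
  (if 0<i then {(i-1,j)} else {}) \<union> (if i+1<m then {(i+1,j)} else {}) \<union>
  (if 0<j then {(i,j-1)} else {}) \<union> (if j+1<n then {(i,j+1)} else {})"
  unfolding grid_V_def grid_E_def by (rule set_eqI; clarsimp; safe; simp_all; linarith)

lemma bins: "(\<forall>x\<in>insert a A. P x) = (P a \<and> (\<forall>x\<in>A. P x))" by auto
lemma bemp: "(\<forall>x\<in>{}. P x) = True" by auto

lemma neq_size: "size A \<noteq> size B \<Longrightarrow> A \<noteq> B" by auto

lemma ball_times: "(\<forall>v\<in>A\<times>B. P v) = (\<forall>i\<in>A. \<forall>j\<in>B. P (i,j))" by auto

definition lamD :: "((nat\<times>nat)\<times>(nat\<times>nat)) list \<Rightarrow> nat\<times>nat \<Rightarrow> nat\<times>nat \<Rightarrow> cet" where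
  "lamD D u v = (0, (u,v) \<notin> set D)"

lemma ad_intro:
  assumes "\<forall>u\<in>V. \<forall>v\<in>{w\<in>V. E u w}. lam v u = hat (lam u v)"
  shows "assembly_design V E lam"
  using assms unfolding assembly_design_def by auto

lemma lower:
  assumes fP: "finite P" and r: "realizes P V E"
    and abc: "a \<in> V" "b \<in> V" "c \<in> V"
    and ca: "card {w\<in>V. E a w} = 2" and cb: "card {w\<in>V. E b w} = 3" and cc: "card {w\<in>V. E c w} = 4"
  shows "3 \<le> card P"
proof -
  obtain lam where l: "\<forall>v\<in>V. tile_at V E lam v \<in> P" using r unfolding realizes_def by blast
  have sz: "size (tile_at V E lam v) = card {w\<in>V. E v w}" for v
    unfolding tile_at_def by simp
  let ?S = "{tile_at V E lam a, tile_at V E lam b, tile_at V E lam c}"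
  have sub: "?S \<subseteq> P" using l abc by auto
  have d1: "tile_at V E lam a \<noteq> tile_at V E lam b"
  proof
    assume "tile_at V E lam a = tile_at V E lam b"
    then have "size (tile_at V E lam a) = size (tile_at V E lam b)" by simp
    then show False using sz[of a] sz[of b] ca cb by simp
  qed
  have d2: "tile_at V E lam a \<noteq> tile_at V E lam c"
  proof
    assume "tile_at V E lam a = tile_at V E lam c"
    then have "size (tile_at V E lam a) = size (tile_at V E lam c)" by simp
    then show False using sz[of a] sz[of c] ca cc by simp
  qed
  have d3: "tile_at V E lam b \<noteq> tile_at V E lam c"
  proof
    assume "tile_at V E lam b = tile_at V E lam c"
    then have "size (tile_at V E lam b) = size (tile_at V E lam c)" by simp
    then show False using sz[of b] sz[of c] cb cc by simp
  qed
  have "card ?S = 3" using d1 d2 d3 by simp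
  with card_mono[OF fP sub] show ?thesis by simp
qed

definition D33 :: "((nat\<times>nat)\<times>(nat\<times>nat)) list" where
 "D33 = [((0,1),(0,0)), ((1,0),(0,0)), ((0,1),(0,2)), ((1,1),(0,1)), ((1,2),(0,2)), ((1,1),(1,0)), ((1,0),(2,0)), ((1,1),(1,2)), ((1,1),(2,1)), ((1,2),(2,2)), ((2,1),(2,0)), ((2,1),(2,2))]"

lemma real33: "realizes {{#(0,True),(0,True)#}, {#(0,False),(0,False),(0,True)#}, {#(0,False),(0,False),(0,False),(0,False)#}} (grid_V 3 3) grid_E"
  unfolding realizes_def
proof (intro exI conjI)
  have "\<forall>i\<in>{0,1,2}. \<forall>j\<in>{0,1,2}. \<forall>v\<in>{w\<in>grid_V 3 3. grid_E (i,j) w}. lamD D33 v (i,j) = hat (lamD D33 (i,j) v)"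
    unfolding bins bemp simp_thms by (simp add: nbr lamD_def D33_def hat_def)
  then show "assembly_design (grid_V 3 3) grid_E (lamD D33)"
    by (intro ad_intro) (simp only: grid_V_def[of 3 3] lt3 lt3 ball_times)
  have "\<forall>i\<in>{0,1,2}. \<forall>j\<in>{0,1,2}. tile_at (grid_V 3 3) grid_E (lamD D33) (i,j) \<in> {{#(0,True),(0,True)#}, {#(0,False),(0,False),(0,True)#}, {#(0,False),(0,False),(0,False),(0,False)#}}"
    unfolding ball_simps tile_at_def by (simp add: nbr lamD_def D33_def)
  then show "\<forall>v\<in>grid_V 3 3. tile_at (grid_V 3 3) grid_E (lamD D33) v \<in> {{#(0,True),(0,True)#}, {#(0,False),(0,False),(0,True)#}, {#(0,False),(0,False),(0,False),(0,False)#}}"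
    by (simp only: grid_V_def[of 3 3] lt3 lt3 ball_times)
qed

lemma T33: "T1 (grid_V 3 3) grid_E = 3"
  unfolding T1_def
proof (rule Least_equality)
  show "\<exists>P. is_pot P \<and> realizes P (grid_V 3 3) grid_E \<and> card P = 3"
    by (rule exI[of _ "{{#(0,True),(0,True)#}, {#(0,False),(0,False),(0,True)#}, {#(0,False),(0,False),(0,False),(0,False)#}}"]) (simp add: real33 is_pot_def hat_def card_insert_if neq_size)
  show "3 \<le> y" if asm: "\<exists>P. is_pot P \<and> realizes P (grid_V 3 3) grid_E \<and> card P = y" for y
  proof -
    obtain P where P: "is_pot P" "realizes P (grid_V 3 3) grid_E" "card P = y" using asm by blast
    have c1: "card {w\<in>grid_V 3 3. grid_E (0,0) w} = 2" by (simp add: nbr)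
    have c2: "card {w\<in>grid_V 3 3. grid_E (0,1) w} = 3" by (simp add: nbr)
    have c3: "card {w\<in>grid_V 3 3. grid_E (1,1) w} = 4" by (simp add: nbr)
    have "3 \<le> card P"
      by (rule lower[OF _ P(2) _ _ _ c1 c2 c3]) (use P(1) in \<open>auto simp: is_pot_def grid_V_def\<close>)
    with P(3) show ?thesis by simp
  qed
qed

definition D35 :: "((nat\<times>nat)\<times>(nat\<times>nat)) list" where
 "D35 = [((0,1),(0,0)), ((1,0),(0,0)), ((0,1),(0,2)), ((1,1),(0,1)), ((0,2),(0,3)), ((0,2),(1,2)), ((0,3),(0,4)), ((0,3),(1,3)), ((1,4),(0,4)), ((1,1),(1,0)), ((1,0),(2,0)), ((1,2),(1,1)), ((2,1),(1,1)), ((1,2),(1,3)), ((2,2),(1,2)), ((1,3),(1,4)), ((1,3),(2,3)), ((1,4),(2,4)), ((2,1),(2,0)), ((2,2),(2,1)), ((2,3),(2,2)), ((2,3),(2,4))]"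

lemma real35: "realizes {{#(0,True),(0,True)#}, {#(0,False),(0,False),(0,True)#}, {#(0,False),(0,False),(0,True),(0,True)#}} (grid_V 3 5) grid_E"
  unfolding realizes_def
proof (intro exI conjI)
  have "\<forall>i\<in>{0,1,2}. \<forall>j\<in>{0,1,2,3,4}. \<forall>v\<in>{w\<in>grid_V 3 5. grid_E (i,j) w}. lamD D35 v (i,j) = hat (lamD D35 (i,j) v)"
    unfolding bins bemp simp_thms by (simp add: nbr lamD_def D35_def hat_def)
  then show "assembly_design (grid_V 3 5) grid_E (lamD D35)"
    by (intro ad_intro) (simp only: grid_V_def[of 3 5] lt3 lt5 ball_times)
  have "\<forall>i\<in>{0,1,2}. \<forall>j\<in>{0,1,2,3,4}. tile_at (grid_V 3 5) grid_E (lamD D35) (i,j) \<in> {{#(0,True),(0,True)#}, {#(0,False),(0,False),(0,True)#}, {#(0,False),(0,False),(0,True),(0,True)#}}"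
    unfolding ball_simps tile_at_def by (simp add: nbr lamD_def D35_def)
  then show "\<forall>v\<in>grid_V 3 5. tile_at (grid_V 3 5) grid_E (lamD D35) v \<in> {{#(0,True),(0,True)#}, {#(0,False),(0,False),(0,True)#}, {#(0,False),(0,False),(0,True),(0,True)#}}"
    by (simp only: grid_V_def[of 3 5] lt3 lt5 ball_times)
qed

lemma T35: "T1 (grid_V 3 5) grid_E = 3"
  unfolding T1_def
proof (rule Least_equality)
  show "\<exists>P. is_pot P \<and> realizes P (grid_V 3 5) grid_E \<and> card P = 3"
    by (rule exI[of _ "{{#(0,True),(0,True)#}, {#(0,False),(0,False),(0,True)#}, {#(0,False),(0,False),(0,True),(0,True)#}}"]) (simp add: real35 is_pot_def hat_def card_insert_if neq_size)
  show "3 \<le> y" if asm: "\<exists>P. is_pot P \<and> realizes P (grid_V 3 5) grid_E \<and> card P = y" for y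
  proof -
    obtain P where P: "is_pot P" "realizes P (grid_V 3 5) grid_E" "card P = y" using asm by blast
    have c1: "card {w\<in>grid_V 3 5. grid_E (0,0) w} = 2" by (simp add: nbr)
    have c2: "card {w\<in>grid_V 3 5. grid_E (0,1) w} = 3" by (simp add: nbr)
    have c3: "card {w\<in>grid_V 3 5. grid_E (1,1) w} = 4" by (simp add: nbr)
    have "3 \<le> card P"
      by (rule lower[OF _ P(2) _ _ _ c1 c2 c3]) (use P(1) in \<open>auto simp: is_pot_def grid_V_def\<close>)
    with P(3) show ?thesis by simp
  qed
qed

definition D44 :: "((nat\<times>nat)\<times>(nat\<times>nat)) list" where
 "D44 = [((0,1),(0,0)), ((1,0),(0,0)), ((0,1),(0,2)), ((1,1),(0,1)), ((0,2),(0,3)), ((0,2),(1,2)), ((1,3),(0,3)), ((1,0),(1,1)), ((2,0),(1,0)), ((1,1),(1,2)), ((2,1),(1,1)), ((1,2),(1,3)), ((1,2),(2,2)), ((1,3),(2,3)), ((2,1),(2,0)), ((2,0),(3,0)), ((2,2),(2,1)), ((3,1),(2,1)), ((2,3),(2,2)), ((2,2),(3,2)), ((2,3),(3,3)), ((3,1),(3,0)), ((3,2),(3,1)), ((3,2),(3,3))]"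

lemma real44: "realizes {{#(0,True),(0,True)#}, {#(0,False),(0,False),(0,True)#}, {#(0,False),(0,False),(0,True),(0,True)#}} (grid_V 4 4) grid_E"
  unfolding realizes_def
proof (intro exI conjI)
  have "\<forall>i\<in>{0,1,2,3}. \<forall>j\<in>{0,1,2,3}. \<forall>v\<in>{w\<in>grid_V 4 4. grid_E (i,j) w}. lamD D44 v (i,j) = hat (lamD D44 (i,j) v)"
    unfolding bins bemp simp_thms by (simp add: nbr lamD_def D44_def hat_def)
  then show "assembly_design (grid_V 4 4) grid_E (lamD D44)"
    by (intro ad_intro) (simp only: grid_V_def[of 4 4] lt4 lt4 ball_times)
  have "\<forall>i\<in>{0,1,2,3}. \<forall>j\<in>{0,1,2,3}. tile_at (grid_V 4 4) grid_E (lamD D44) (i,j) \<in> {{#(0,True),(0,True)#}, {#(0,False),(0,False),(0,True)#}, {#(0,False),(0,False),(0,True),(0,True)#}}"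
    unfolding ball_simps tile_at_def by (simp add: nbr lamD_def D44_def)
  then show "\<forall>v\<in>grid_V 4 4. tile_at (grid_V 4 4) grid_E (lamD D44) v \<in> {{#(0,True),(0,True)#}, {#(0,False),(0,False),(0,True)#}, {#(0,False),(0,False),(0,True),(0,True)#}}"
    by (simp only: grid_V_def[of 4 4] lt4 lt4 ball_times)
qed

lemma T44: "T1 (grid_V 4 4) grid_E = 3"
  unfolding T1_def
proof (rule Least_equality)
  show "\<exists>P. is_pot P \<and> realizes P (grid_V 4 4) grid_E \<and> card P = 3"
    by (rule exI[of _ "{{#(0,True),(0,True)#}, {#(0,False),(0,False),(0,True)#}, {#(0,False),(0,False),(0,True),(0,True)#}}"]) (simp add: real44 is_pot_def hat_def card_insert_if neq_size)
  show "3 \<le> y" if asm: "\<exists>P. is_pot P \<and> realizes P (grid_V 4 4) grid_E \<and> card P = y" for y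
  proof -
    obtain P where P: "is_pot P" "realizes P (grid_V 4 4) grid_E" "card P = y" using asm by blast
    have c1: "card {w\<in>grid_V 4 4. grid_E (0,0) w} = 2" by (simp add: nbr)
    have c2: "card {w\<in>grid_V 4 4. grid_E (0,1) w} = 3" by (simp add: nbr)
    have c3: "card {w\<in>grid_V 4 4. grid_E (1,1) w} = 4" by (simp add: nbr)
    have "3 \<le> card P"
      by (rule lower[OF _ P(2) _ _ _ c1 c2 c3]) (use P(1) in \<open>auto simp: is_pot_def grid_V_def\<close>)
    with P(3) show ?thesis by simp
  qed
qed

theorem proposition6:
  fixes m n :: nat
  assumes "(m, n) \<in> {(3, 3), (3, 5), (4, 4)}"
  shows "T1 (grid_V m n) grid_E = 3"
  using assms T33 T35 T44 by auto

end
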